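(* Let $\bar\gamma_{\mathrm{E}}>0$, $\mathcal{R}>0$ and $\alpha>0$ be fixed, and let $\bar\gamma_{\mathrm{D}}>0$ with $\bar\gamma_{\mathrm{R}}=\alpha\bar\gamma_{\mathrm{D}}$. Let $h_{\mathrm{S},\mathrm{R}},h_{\mathrm{R},\mathrm{D}},h_{\mathrm{R},\mathrm{E}}$ be independent $\mathcal{CN}(0,1)$ random variables, and define $$\mathcal{R}^{1}_{\mathrm{R}\to\mathrm{D}}=\max\left\{\log_2\frac{1+\bar\gamma_{\mathrm{D}}|h_{\mathrm{R},\mathrm{D}}|^2}{1+\bar\gamma_{\mathrm{E}}|h_{\mathrm{R},\mathrm{E}}|^2},0\right\},\qquad \mathcal{R}^{1}_{\mathrm{S}\to\mathrm{R}}=\log_2\left(1+\bar\gamma_{\mathrm{R}}|h_{\mathrm{S},\mathrm{R}}|^2\right),$$ $\mathcal{R}_1=\max\{\min\{\mathcal{R}^{1}_{\mathrm{R}\to\mathrm{D}},\mathcal{R}^{1}_{\mathrm{S}\to\mathrm{R}}\},0\}$ and $\mathcal{P}_1=\Pr(\mathcal{R}_1<\mathcal{R})$ (a function of $\bar\gamma_{\mathrm{D}}$). Then as $\bar\gamma_{\mathrm{D}}\to\infty$, $$\mathcal{P}_1\approx\mathcal{M}_1\bar\gamma_{\mathrm{D}}^{-1},$$ in the sense that $\bar\gamma_{\mathrm{D}}\mathcal{P}_1\to\mathcal{M}_1$, where $\mathcal{M}_1=(2^{\mathcal{R}}-1)(1+1/\alpha)+2^{\mathcal{R}}\bar\ga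mma_{\mathrm{E}}>0$.
   Context: $\mathcal{CN}(0,1)$ denotes a circularly symmetric complex Gaussian random variable with zero mean and unit variance (Rayleigh fading). The quantities model a decode-and-forward relay system where the eavesdropper overhears only the relay; $\bar\gamma$'s are average SNRs, $\mathcal{R}_1$ the secrecy capacity and $\mathcal{P}_1$ the secrecy outage probability. *)

theory Defs
  imports "HOL-Probability.Probability"
begin

definition cn01_density :: "complex \<Rightarrow> real" where
  "cn01_density z = exp (- (cmod z)\<^sup>2) / pi"

definition rate_RD :: "real \<Rightarrow> real \<Rightarrow> complex \<Rightarrow> complex \<Rightarrow> real" where
  "rate_RD gD gE hRD hRE =
     max (log 2 ((1 + gD * (cmod hRD)\<^sup>2) / (1 + gE * (cmod hRE)\<^sup>2))) 0"

definition rate_SR :: "real \<Rightarrow> complex \<Rightarrow> real" where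
  "rate_SR gR hSR = log 2 (1 + gR * (cmod hSR)\<^sup>2)"

definition secrecy_rate1 ::
  "real \<Rightarrow> real \<Rightarrow> real \<Rightarrow> complex \<Rightarrow> complex \<Rightarrow> complex \<Rightarrow> real" where
  "secrecy_rate1 gD gR gE hSR hRD hRE =
     max (min (rate_RD gD gE hRD hRE) (rate_SR gR hSR)) 0"

end

theory Submission
  imports Defs "HOL-Real_Asymp.Real_Asymp"
begin

lemma disk_meas:
  assumes "0 \<le> t" "t \<le> s"
  shows "emeasure lborel {z::complex. t \<le> (cmod z)\<^sup>2 \<and> (cmod z)\<^sup>2 \<le> s} = ennreal (pi * (s - t))"
proof -
  have eq: "{z::complex. t \<le> (cmod z)\<^sup>2 \<and> (cmod z)\<^sup>2 \<le> s} = cball 0 (sqrt s) - ball 0 (sqrt t)"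
  proof -
    have a: "cmod x \<le> sqrt s \<longleftrightarrow> (cmod x)\<^sup>2 \<le> s" for x :: complex
      by (metis real_sqrt_le_iff norm_ge_zero real_sqrt_abs abs_of_nonneg)
    have b: "cmod x < sqrt t \<longleftrightarrow> (cmod x)\<^sup>2 < t" for x :: complex
      by (metis real_sqrt_less_iff norm_ge_zero real_sqrt_abs abs_of_nonneg)
    have c: "sqrt t \<le> sqrt s" using assms by simp
    show ?thesis using a b by (auto simp: not_less)
  qed
  have "emeasure lborel (cball (0::complex) (sqrt s) - ball 0 (sqrt t))
      = emeasure lborel (cball (0::complex) (sqrt s)) - emeasure lborel (ball (0::complex) (sqrt t))"
  proof (intro emeasure_Diff)
    show "ball (0::complex) (sqrt t) \<subseteq> cball 0 (sqrt s)"
      using assms by (intro order.trans[OF ball_subset_cball] cball_subset_cball_iff[THEN iffD2]) auto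
  qed (auto simp: emeasure_ball assms)
  also have "\<dots> = ennreal (pi * s) - ennreal (pi * t)"
    using assms by (simp add: emeasure_ball emeasure_cball unit_ball_vol_2)
  also have "\<dots> = ennreal (pi * (s - t))"
    using assms by (simp add: ennreal_minus right_diff_distrib)
  finally show ?thesis using eq by simp
qed

lemma exp_tail:
  assumes "c > 0"
  shows "ennreal (exp (- c * u)) = (\<integral>\<^sup>+s. ennreal (c * exp (- c * s)) * indicator {u..} s \<partial>lborel)"
proof -
  have "(\<integral>\<^sup>+s. ennreal (c * exp (- c * s)) * indicator {u..} s \<partial>lborel) = ennreal (0 - (- exp (- c * u)))"
  proof (rule nn_integral_FTC_atLeast)
    show "((\<lambda>s. - exp (- c * s)) \<longlongrightarrow> 0) at_top" using assms by real_asymp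
  qed (use assms in \<open>auto intro!: derivative_eq_intros\<close>)
  then show ?thesis by simp
qed

lemma radial_tail:
  assumes "c > 0" "t \<ge> 0"
  shows "(\<integral>\<^sup>+z. ennreal (exp (- c * (cmod z)\<^sup>2)) * indicator {z. t \<le> (cmod z)\<^sup>2} z \<partial>lborel)
     = ennreal (pi / c * exp (- c * t))"
proof -
  interpret P2: pair_sigma_finite "lborel :: complex measure" "lborel :: real measure" ..
  have "(\<integral>\<^sup>+z. ennreal (exp (- c * (cmod z)\<^sup>2)) * indicator {z. t \<le> (cmod z)\<^sup>2} z \<partial>lborel)
     = (\<integral>\<^sup>+z. \<integral>\<^sup>+s. ennreal (c * exp (- c * s)) * indicator {(cmod z)\<^sup>2..} s * indicator {z. t \<le> (cmod z)\<^sup>2} z \<partial>lborel \<partial>lborel)"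
    by (subst exp_tail[OF assms(1)]) (simp add: nn_integral_multc)
  also have "\<dots> = (\<integral>\<^sup>+s. \<integral>\<^sup>+z. ennreal (c * exp (- c * s)) * indicator {(cmod z)\<^sup>2..} s * indicator {z. t \<le> (cmod z)\<^sup>2} z \<partial>lborel \<partial>lborel)"
    by (rule pair_sigma_finite.Fubini'[symmetric]) (unfold_locales, unfold indicator_def mem_Collect_eq atLeast_iff, measurable)
  also have "\<dots> = (\<integral>\<^sup>+s. ennreal (c * exp (- c * s) * (pi * (s - t))) * indicator {t..} s \<partial>lborel)"
  proof (rule nn_integral_cong)
    fix s :: real
    have "(\<integral>\<^sup>+z. ennreal (c * exp (- c * s)) * indicator {(cmod z)\<^sup>2..} s * indicator {z. t \<le> (cmod z)\<^sup>2} z \<partial>lborel)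
      = ennreal (c * exp (- c * s)) * (\<integral>\<^sup>+z. indicator {z::complex. t \<le> (cmod z)\<^sup>2 \<and> (cmod z)\<^sup>2 \<le> s} z \<partial>lborel)"
      by (subst nn_integral_cmult[symmetric]) (auto intro!: nn_integral_cong split: split_indicator)
    also have "\<dots> = ennreal (c * exp (- c * s) * (pi * (s - t))) * indicator {t..} s"
    proof (cases "t \<le> s")
      case True
      then show ?thesis using assms disk_meas[of t s] by (simp add: ennreal_mult)
    next
      case False
      then have "{z::complex. t \<le> (cmod z)\<^sup>2 \<and> (cmod z)\<^sup>2 \<le> s} = {}" by auto
      then show ?thesis using False by simp
    qed
    finally show "(\<integral>\<^sup>+z. ennreal (c * exp (- c * s)) * indicator {(cmod z)\<^sup>2..} s * indicator {z. t \<le> (cmod z)\<^sup>2} z \<partial>lborel)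
      = ennreal (c * exp (- c * s) * (pi * (s - t))) * indicator {t..} s" .
  qed
  also have "\<dots> = ennreal (0 - (- pi * (t - t + 1/c) * exp (- c * t)))"
  proof (rule nn_integral_FTC_atLeast[where F="\<lambda>s. - pi * (s - t + 1/c) * exp (- c * s)" and T=0])
    show "((\<lambda>s. - pi * (s - t + 1/c) * exp (- c * s)) \<longlongrightarrow> 0) at_top" using assms by real_asymp
    show "DERIV (\<lambda>s. - pi * (s - t + 1/c) * exp (- c * s)) x :> c * exp (- c * x) * (pi * (x - t))" for x
      using assms by (auto intro!: derivative_eq_intros simp: field_simps)
  qed (use assms in auto)
  finally show ?thesis by simp
qed

lemma set_borel_tail: "{z::complex. t \<le> (cmod z)\<^sup>2} \<in> sets borel"
proof -
  have "Measurable.pred borel (\<lambda>z::complex. t \<le> (cmod z)\<^sup>2)" by measurable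
  then show ?thesis by (simp add: pred_def)
qed

lemma cn01_tail_int:
  assumes "t \<ge> 0"
  shows "(\<integral>\<^sup>+z. ennreal (cn01_density z) * indicator {z. t \<le> (cmod z)\<^sup>2} z \<partial>lborel) = ennreal (exp (- t))"
proof -
  have "(\<integral>\<^sup>+z. ennreal (cn01_density z) * indicator {z. t \<le> (cmod z)\<^sup>2} z \<partial>lborel)
      = (\<integral>\<^sup>+z. ennreal (1/pi) * (ennreal (exp (- 1 * (cmod z)\<^sup>2)) * indicator {z. t \<le> (cmod z)\<^sup>2} z) \<partial>lborel)"
    by (intro nn_integral_cong) (simp add: cn01_density_def divide_inverse ennreal_mult mult_ac)
  also have "\<dots> = ennreal (1/pi) * ennreal (pi / 1 * exp (- 1 * t))"
    using radial_tail[of 1 t] assms by (simp add: nn_integral_cmult)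
  also have "\<dots> = ennreal (exp (- t))"
    by (simp add: ennreal_mult[symmetric])
  finally show ?thesis .
qed

lemma single_tail:
  assumes "distributed M lborel h (\<lambda>z. ennreal (cn01_density z))" "t \<ge> 0"
  shows "emeasure M (h -` {z. t \<le> (cmod z)\<^sup>2} \<inter> space M) = ennreal (exp (- t))"
  using distributed_emeasure[OF assms(1), of "{z. t \<le> (cmod z)\<^sup>2}"] set_borel_tail[of t]
    cn01_tail_int[OF assms(2)] by simp

lemma cn01_meas[measurable]: "cn01_density \<in> borel_measurable borel"
  unfolding cn01_density_def[abs_def] by measurable

lemma set_borel_B1: "{p::complex\<times>complex. b + k * (cmod (snd p))\<^sup>2 \<le> (cmod (fst p))\<^sup>2} \<in> sets (lborel \<Otimes>\<^sub>M lborel)"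
proof -
  have "Measurable.pred (lborel \<Otimes>\<^sub>M lborel) (\<lambda>p::complex\<times>complex. b + k * (cmod (snd p))\<^sup>2 \<le> (cmod (fst p))\<^sup>2)" by measurable
  then show ?thesis by (simp add: pred_def space_pair_measure)
qed

lemma pair_tail_int:
  assumes "b \<ge> 0" "k \<ge> 0"
  shows "(\<integral>\<^sup>+p. (\<lambda>(x, y). ennreal (cn01_density x) * ennreal (cn01_density y)) p *
            indicator {p::complex\<times>complex. b + k * (cmod (snd p))\<^sup>2 \<le> (cmod (fst p))\<^sup>2} p \<partial>(lborel \<Otimes>\<^sub>M lborel))
         = ennreal (exp (- b) / (1 + k))"
proof -
  have ps: "pair_sigma_finite (lborel :: complex measure) (lborel :: complex measure)"
    by (simp add: pair_sigma_finite_def lborel.sigma_finite_measure_axioms)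
  let ?B = "{p::complex\<times>complex. b + k * (cmod (snd p))\<^sup>2 \<le> (cmod (fst p))\<^sup>2}"
  let ?f = "\<lambda>p. (\<lambda>(x, y). ennreal (cn01_density x) * ennreal (cn01_density y)) p * indicator ?B p"
  have m: "?f \<in> borel_measurable (lborel \<Otimes>\<^sub>M lborel)"
    using set_borel_B1[of b k] by measurable
  have "(\<integral>\<^sup>+p. ?f p \<partial>(lborel \<Otimes>\<^sub>M lborel)) = (\<integral>\<^sup>+v. \<integral>\<^sup>+u. ?f (u, v) \<partial>lborel \<partial>lborel)"
    using pair_sigma_finite.nn_integral_snd[OF ps m] by simp
  also have "\<dots> = (\<integral>\<^sup>+v. ennreal (exp (- b) / pi) * (ennreal (exp (- (1 + k) * (cmod v)\<^sup>2)) * indicator {v. 0 \<le> (cmod v)\<^sup>2} v) \<partial>lborel)"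
  proof (rule nn_integral_cong)
    fix v :: complex
    have "(\<integral>\<^sup>+u. ?f (u, v) \<partial>lborel) = (\<integral>\<^sup>+u. ennreal (cn01_density v) * (ennreal (cn01_density u) * indicator {u. b + k * (cmod v)\<^sup>2 \<le> (cmod u)\<^sup>2} u) \<partial>lborel)"
      by (intro nn_integral_cong) (auto simp: mult.commute split: split_indicator)
    also have "\<dots> = ennreal (cn01_density v) * ennreal (exp (- (b + k * (cmod v)\<^sup>2)))"
      using assms by (subst nn_integral_cmult) (auto simp: cn01_tail_int)
    also have "\<dots> = ennreal (exp (- b) / pi) * (ennreal (exp (- (1 + k) * (cmod v)\<^sup>2)) * indicator {v. 0 \<le> (cmod v)\<^sup>2} v)"
      by (simp add: cn01_density_def ennreal_mult[symmetric] mult_exp_exp field_simps)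
    finally show "(\<integral>\<^sup>+u. ?f (u, v) \<partial>lborel) = ennreal (exp (- b) / pi) * (ennreal (exp (- (1 + k) * (cmod v)\<^sup>2)) * indicator {v. 0 \<le> (cmod v)\<^sup>2} v)" .
  qed
  also have "\<dots> = ennreal (exp (- b) / pi) * ennreal (pi / (1 + k) * exp (- (1 + k) * 0))"
    using radial_tail[of "1+k" 0] assms by (simp add: nn_integral_cmult)
  also have "\<dots> = ennreal (exp (- b) / (1 + k))"
    using assms by (simp add: ennreal_mult[symmetric])
  finally show ?thesis .
qed

lemma good_prob:
  fixes M :: "'a measure" and hSR hRD hRE :: "'a \<Rightarrow> complex"
  assumes "prob_space M"
    and ind: "prob_space.indep_vars M (\<lambda>_. borel) (\<lambda>i. [hSR, hRD, hRE] ! i) {0..<3}"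
    and dSR: "distributed M lborel hSR (\<lambda>z. ennreal (cn01_density z))"
    and dRD: "distributed M lborel hRD (\<lambda>z. ennreal (cn01_density z))"
    and dRE: "distributed M lborel hRE (\<lambda>z. ennreal (cn01_density z))"
    and "a \<ge> 0" "b \<ge> 0" "k \<ge> 0"
  shows "measure M {\<omega> \<in> space M. a \<le> (cmod (hSR \<omega>))\<^sup>2 \<and> b + k * (cmod (hRE \<omega>))\<^sup>2 \<le> (cmod (hRD \<omega>))\<^sup>2}
         = exp (- a) * (exp (- b) / (1 + k))"
proof -
  interpret prob_space M by fact
  let ?X = "\<lambda>i. [hSR, hRD, hRE] ! i"
  have i1: "indep_var (PiM {0} (\<lambda>_. borel)) (\<lambda>\<omega>. restrict (\<lambda>i. ?X i \<omega>) {0})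
                      (PiM {1,2} (\<lambda>_. borel)) (\<lambda>\<omega>. restrict (\<lambda>i. ?X i \<omega>) {1,2})"
    by (rule indep_var_restrict[OF ind]) auto
  have i1': "indep_var (lborel \<Otimes>\<^sub>M lborel) ((\<lambda>f. (f 0, 0::complex)) \<circ> (\<lambda>\<omega>. restrict (\<lambda>i. ?X i \<omega>) {0}))
                      (lborel \<Otimes>\<^sub>M lborel) ((\<lambda>f. (f 1, f 2)) \<circ> (\<lambda>\<omega>. restrict (\<lambda>i. ?X i \<omega>) {1,2}))"
    by (rule indep_var_compose[OF i1]) (auto intro!: measurable_Pair measurable_component_singleton)
  have e1: "((\<lambda>f. (f 0, 0::complex)) \<circ> (\<lambda>\<omega>. restrict (\<lambda>i. ?X i \<omega>) {0})) = (\<lambda>\<omega>. (hSR \<omega>, 0))"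
    by (auto simp: fun_eq_iff)
  have e2: "((\<lambda>f. (f 1, f 2)) \<circ> (\<lambda>\<omega>. restrict (\<lambda>i. ?X i \<omega>) {1,2})) = (\<lambda>\<omega>. (hRD \<omega>, hRE \<omega>))"
    by (auto simp: fun_eq_iff)
  have I1: "indep_var (lborel \<Otimes>\<^sub>M lborel) (\<lambda>\<omega>. (hSR \<omega>, 0)) (lborel \<Otimes>\<^sub>M lborel) (\<lambda>\<omega>. (hRD \<omega>, hRE \<omega>))"
    using i1' unfolding e1 e2 .
  have i2: "indep_var (PiM {1} (\<lambda>_. borel)) (\<lambda>\<omega>. restrict (\<lambda>i. ?X i \<omega>) {1})
                      (PiM {2} (\<lambda>_. borel)) (\<lambda>\<omega>. restrict (\<lambda>i. ?X i \<omega>) {2})"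
    by (rule indep_var_restrict[OF ind]) auto
  have i2': "indep_var lborel ((\<lambda>f. f 1) \<circ> (\<lambda>\<omega>. restrict (\<lambda>i. ?X i \<omega>) {1}))
                      lborel ((\<lambda>f. f 2) \<circ> (\<lambda>\<omega>. restrict (\<lambda>i. ?X i \<omega>) {2}))"
    by (rule indep_var_compose[OF i2]) (auto intro!: measurable_component_singleton)
  have e3: "((\<lambda>f. f 1) \<circ> (\<lambda>\<omega>. restrict (\<lambda>i. ?X i \<omega>) {1})) = hRD"
    by (auto simp: fun_eq_iff)
  have e4: "((\<lambda>f. f 2) \<circ> (\<lambda>\<omega>. restrict (\<lambda>i. ?X i \<omega>) {2})) = hRE"
    by (auto simp: fun_eq_iff numeral_2_eq_2)
  have I2: "indep_var lborel hRD lborel hRE"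
    using i2' unfolding e3 e4 .
  have dj: "distributed M (lborel \<Otimes>\<^sub>M lborel) (\<lambda>x. (hRD x, hRE x))
      (\<lambda>(x, y). ennreal (cn01_density x) * ennreal (cn01_density y))"
    by (rule distributed_joint_indep[OF _ _ dRD dRE I2]) (auto intro: lborel.sigma_finite_measure_axioms)
  let ?A = "{z::complex. a \<le> (cmod z)\<^sup>2}"
  let ?B = "{p::complex\<times>complex. b + k * (cmod (snd p))\<^sup>2 \<le> (cmod (fst p))\<^sup>2}"
  have pA: "emeasure M (hSR -` ?A \<inter> space M) = ennreal (exp (- a))"
    using single_tail[OF dSR \<open>a \<ge> 0\<close>] .
  have pB: "emeasure M ((\<lambda>x. (hRD x, hRE x)) -` ?B \<inter> space M) = ennreal (exp (- b) / (1 + k))"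
    using distributed_emeasure[OF dj set_borel_B1[of b k]] pair_tail_int[OF \<open>b \<ge> 0\<close> \<open>k \<ge> 0\<close>] by simp
  have sA: "?A \<times> (UNIV::complex set) \<in> sets (lborel \<Otimes>\<^sub>M lborel)"
    using set_borel_tail[of a] by (intro pair_measureI) auto
  have "prob ((\<lambda>x. ((hSR x, 0), (hRD x, hRE x))) -` ((?A \<times> UNIV) \<times> ?B) \<inter> space M)
      = prob ((\<lambda>\<omega>. (hSR \<omega>, 0)) -` (?A \<times> UNIV) \<inter> space M) * prob ((\<lambda>x. (hRD x, hRE x)) -` ?B \<inter> space M)"
    using indep_varD[OF I1 sA set_borel_B1[of b k]] by (simp add: vimage_def)
  also have "(\<lambda>\<omega>. (hSR \<omega>, 0::complex)) -` (?A \<times> UNIV) \<inter> space M = hSR -` ?A \<inter> space M"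
    by auto
  also have "prob (hSR -` ?A \<inter> space M) = exp (- a)"
    using pA by (simp add: measure_def)
  also have "prob ((\<lambda>x. (hRD x, hRE x)) -` ?B \<inter> space M) = exp (- b) / (1 + k)"
    using pB \<open>k \<ge> 0\<close> by (simp add: measure_def)
  also have "(\<lambda>x. ((hSR x, 0::complex), (hRD x, hRE x))) -` ((?A \<times> UNIV) \<times> ?B) \<inter> space M
      = {\<omega> \<in> space M. a \<le> (cmod (hSR \<omega>))\<^sup>2 \<and> b + k * (cmod (hRE \<omega>))\<^sup>2 \<le> (cmod (hRD \<omega>))\<^sup>2}"
    by auto
  finally show ?thesis .
qed

lemma limit_part:
  fixes c d \<alpha> :: real assumes "c > 0" "d > 0" "\<alpha> > 0"
  shows "((\<lambda>g. g * (1 - exp (- (c / (\<alpha> * g))) * (exp (- (c / g)) / (1 + d / g)))) \<longlongrightarrow> c * (1 + 1/\<alpha>) + d) at_top"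
proof -
  have eq: "c * (1 + 1/\<alpha>) + d = c * inverse \<alpha> - (- d - c)" by (simp add: field_simps)
  have lim: "((\<lambda>g. g * (1 - exp (- (c / (\<alpha> * g))) * (exp (- (c / g)) / (1 + d / g)))) \<longlongrightarrow> c * inverse \<alpha> - (- d - c)) at_top"
    using assms by real_asymp
  show ?thesis by (subst eq) (rule lim)
qed

lemma rate_iff:
  assumes "g > 0" "\<alpha> > 0" "gE > 0" "R > 0"
  shows "secrecy_rate1 g (\<alpha> * g) gE x y z < R \<longleftrightarrow>
    \<not> ((2 powr R - 1) / (\<alpha> * g) \<le> (cmod x)\<^sup>2 \<and>
       (2 powr R - 1) / g + (2 powr R * gE) / g * (cmod z)\<^sup>2 \<le> (cmod y)\<^sup>2)"
proof -
  have p1: "0 < 1 + \<alpha> * g * (cmod x)\<^sup>2" using assms by (simp add: add_pos_nonneg)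
  have p2: "0 < 1 + gE * (cmod z)\<^sup>2" using assms by (simp add: add_pos_nonneg)
  have p3: "0 < 1 + g * (cmod y)\<^sup>2" using assms by (simp add: add_pos_nonneg)
  have SR: "rate_SR (\<alpha> * g) x < R \<longleftrightarrow> \<not> (2 powr R - 1) / (\<alpha> * g) \<le> (cmod x)\<^sup>2"
  proof -
    have "rate_SR (\<alpha> * g) x < R \<longleftrightarrow> 1 + \<alpha> * g * (cmod x)\<^sup>2 < 2 powr R"
      unfolding rate_SR_def using p1 by (simp add: log_less_iff)
    also have "\<dots> \<longleftrightarrow> (\<alpha> * g) * (cmod x)\<^sup>2 < 2 powr R - 1" by linarith
    also have "\<dots> \<longleftrightarrow> (cmod x)\<^sup>2 < (2 powr R - 1) / (\<alpha> * g)"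
      by (subst pos_less_divide_eq) (use assms in \<open>auto simp: mult_ac\<close>)
    also have "\<dots> \<longleftrightarrow> \<not> (2 powr R - 1) / (\<alpha> * g) \<le> (cmod x)\<^sup>2" by linarith
    finally show ?thesis .
  qed
  have RD: "rate_RD g gE y z < R \<longleftrightarrow> \<not> (2 powr R - 1) / g + (2 powr R * gE) / g * (cmod z)\<^sup>2 \<le> (cmod y)\<^sup>2"
  proof -
    have "rate_RD g gE y z < R \<longleftrightarrow> log 2 ((1 + g * (cmod y)\<^sup>2) / (1 + gE * (cmod z)\<^sup>2)) < R"
      unfolding rate_RD_def using assms by simp
    also have "\<dots> \<longleftrightarrow> (1 + g * (cmod y)\<^sup>2) / (1 + gE * (cmod z)\<^sup>2) < 2 powr R"
      using p2 p3 by (simp add: log_less_iff)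
    also have "\<dots> \<longleftrightarrow> 1 + g * (cmod y)\<^sup>2 < 2 powr R * (1 + gE * (cmod z)\<^sup>2)"
      using p2 by (simp add: pos_divide_less_eq)
    also have "\<dots> \<longleftrightarrow> g * (cmod y)\<^sup>2 < (2 powr R - 1) + (2 powr R * gE) * (cmod z)\<^sup>2"
      by (simp add: algebra_simps)
    also have "\<dots> \<longleftrightarrow> (cmod y)\<^sup>2 < ((2 powr R - 1) + (2 powr R * gE) * (cmod z)\<^sup>2) / g"
      using assms by (simp add: pos_less_divide_eq mult.commute)
    also have "\<dots> \<longleftrightarrow> \<not> (2 powr R - 1) / g + (2 powr R * gE) / g * (cmod z)\<^sup>2 \<le> (cmod y)\<^sup>2"
      by (simp add: not_le add_divide_distrib)
    finally show ?thesis .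
  qed
  have "secrecy_rate1 g (\<alpha> * g) gE x y z < R \<longleftrightarrow> rate_RD g gE y z < R \<or> rate_SR (\<alpha> * g) x < R"
    unfolding secrecy_rate1_def using assms by auto
  then show ?thesis using SR RD by blast
qed

theorem theorem2:
  fixes M :: "'a measure"
    and hSR hRD hRE :: "'a \<Rightarrow> complex"
    and gE R \<alpha> :: real
  assumes "prob_space M"
    and "gE > 0" and "R > 0" and "\<alpha> > 0"
    and "prob_space.indep_vars M (\<lambda>_. borel) (\<lambda>i. [hSR, hRD, hRE] ! i) {0..<3}"
    and "distributed M lborel hSR (\<lambda>z. ennreal (cn01_density z))"
    and "distributed M lborel hRD (\<lambda>z. ennreal (cn01_density z))"
    and "distributed M lborel hRE (\<lambda>z. ennreal (cn01_density z))"
  shows "((\<lambda>gD. gD * measure M {\<omega> \<in> space M.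
              secrecy_rate1 gD (\<alpha> * gD) gE (hSR \<omega>) (hRD \<omega>) (hRE \<omega>) < R})
           \<longlongrightarrow> (2 powr R - 1) * (1 + 1 / \<alpha>) + 2 powr R * gE) at_top
         \<and> (2 powr R - 1) * (1 + 1 / \<alpha>) + 2 powr R * gE > 0"
proof -
  interpret prob_space M by fact
  define c where "c = 2 powr R - 1"
  define d where "d = 2 powr R * gE"
  have c: "c > 0" unfolding c_def using \<open>R > 0\<close> by simp
  have d: "d > 0" unfolding d_def using \<open>gE > 0\<close> by simp
  have [measurable]: "hSR \<in> borel_measurable M" "hRD \<in> borel_measurable M" "hRE \<in> borel_measurable M"
    using assms(6-8) by (auto dest!: distributed_measurable)
  have key: "measure M {\<omega> \<in> space M. secrecy_rate1 g (\<alpha> * g) gE (hSR \<omega>) (hRD \<omega>) (hRE \<omega>) < R}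
      = 1 - exp (- (c / (\<alpha> * g))) * (exp (- (c / g)) / (1 + d / g))" if g: "g > 0" for g
  proof -
    let ?G = "{\<omega> \<in> space M. c / (\<alpha> * g) \<le> (cmod (hSR \<omega>))\<^sup>2 \<and> c / g + d / g * (cmod (hRE \<omega>))\<^sup>2 \<le> (cmod (hRD \<omega>))\<^sup>2}"
    have "{\<omega> \<in> space M. secrecy_rate1 g (\<alpha> * g) gE (hSR \<omega>) (hRD \<omega>) (hRE \<omega>) < R} = space M - ?G"
      using rate_iff[OF g \<open>\<alpha> > 0\<close> \<open>gE > 0\<close> \<open>R > 0\<close>] unfolding c_def d_def by auto
    moreover have "?G \<in> events" by measurable
    ultimately have "measure M {\<omega> \<in> space M. secrecy_rate1 g (\<alpha> * g) gE (hSR \<omega>) (hRD \<omega>) (hRE \<omega>) < R} = 1 - prob ?G"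
      by (simp add: prob_compl)
    also have "prob ?G = exp (- (c / (\<alpha> * g))) * (exp (- (c / g)) / (1 + d / g))"
      by (rule good_prob[OF assms(1,5-8)]) (use c d g \<open>\<alpha> > 0\<close> in auto)
    finally show ?thesis .
  qed
  have "((\<lambda>g. g * (1 - exp (- (c / (\<alpha> * g))) * (exp (- (c / g)) / (1 + d / g)))) \<longlongrightarrow> c * (1 + 1/\<alpha>) + d) at_top"
    by (rule limit_part[OF c d \<open>\<alpha> > 0\<close>])
  then have "((\<lambda>gD. gD * measure M {\<omega> \<in> space M.
              secrecy_rate1 gD (\<alpha> * gD) gE (hSR \<omega>) (hRD \<omega>) (hRE \<omega>) < R}) \<longlongrightarrow> c * (1 + 1/\<alpha>) + d) at_top"
  proof (rule Lim_transform_eventually)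
    show "\<forall>\<^sub>F g in at_top. g * (1 - exp (- (c / (\<alpha> * g))) * (exp (- (c / g)) / (1 + d / g))) =
       g * measure M {\<omega> \<in> space M. secrecy_rate1 g (\<alpha> * g) gE (hSR \<omega>) (hRD \<omega>) (hRE \<omega>) < R}"
      using eventually_gt_at_top[of 0] by eventually_elim (simp add: key)
  qed
  moreover have "c * (1 + 1/\<alpha>) + d > 0" using c d \<open>\<alpha> > 0\<close> by (simp add: add_pos_pos)
  ultimately show ?thesis unfolding c_def d_def by simp
qed

end
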